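(* Let $p$ be an odd prime, let $0<s<p-1$ be an integer, and let $0<a,a'<p$ be integers with $a'\equiv sa\pmod p$. Then $b_{1,s}(a)=0$ in $\mathbb F_p$ (evaluating at $a$ viewed as an element of $\mathbb F_p$) if and only if $a+a'<p$.
   Context: $\mathbb F_p$ is the field of $p$ elements, $\alpha$ an indeterminate, $\binom{x}{m}=x(x-1)\cdots(x-m+1)/m!$. For integers $0<r,s<p$ (interpreted as elements of $\mathbb F_p$), $b_{r,s}(\alpha)=\sum_{k=0}^{p-1}(-r/s)^k\binom{r\alpha-1}{p-1-k}\binom{s\alpha-1}{k}\in\mathbb F_p[\alpha]$. *)

theory Defs
  imports "HOL-Computational_Algebra.Polynomial" "HOL-Number_Theory.Cong" "HOL-Library.Cardinality"
begin

text \<open>The field F_p is represented by an arbitrary field type 'a with exactly p elements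
  (unique up to isomorphism).\<close>

definition binom_poly :: "'a::field poly \<Rightarrow> nat \<Rightarrow> 'a poly" where
  "binom_poly x m = smult (inverse (of_nat (fact m))) (\<Prod>i<m. x - [:of_nat i:])"

definition b_poly :: "nat \<Rightarrow> nat \<Rightarrow> 'a::{field,finite} poly" where
  "b_poly r s = (\<Sum>k<CARD('a).
      smult ((- (of_nat r / of_nat s)) ^ k)
        (binom_poly [:-1, of_nat r:] (CARD('a) - 1 - k) * binom_poly [:-1, of_nat s:] k))"

end

theory Submission
  imports Defs "HOL-Number_Theory.Residues" "HOL-Computational_Algebra.Primes"
begin

lemma fact_choose_prod:
  "of_nat (fact m * (N choose m)) = (\<Prod>i<m. (of_nat N - of_nat i :: 'a::comm_ring_1))"
proof (induction m)
  case 0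
  then show ?case by simp
next
  case (Suc m)
  have e: "Suc m * (N choose Suc m) = (N - m) * (N choose m)"
    using binomial_absorption[of m N] binomial_absorb_comp[of N m] by simp
  have "fact (Suc m) * (N choose Suc m) = fact m * (Suc m * (N choose Suc m))"
    by (simp only: fact_Suc of_nat_id mult.assoc mult.left_commute[of "Suc m"])
  also have "\<dots> = fact m * ((N - m) * (N choose m))" using e by simp
  finally have "fact (Suc m) * (N choose Suc m) = fact m * ((N - m) * (N choose m))" .
  hence "(of_nat (fact (Suc m) * (N choose Suc m)) :: 'a)
        = of_nat (fact m * (N choose m)) * of_nat (N - m)"
    by (simp only: of_nat_mult mult_ac)
  also have "\<dots> = (\<Prod>i<m. (of_nat N - of_nat i :: 'a)) * (of_nat N - of_nat m)"
  proof (cases "m \<le> N")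
    case True
    then show ?thesis using Suc by (simp add: of_nat_diff)
  next
    case False
    hence "N choose m = 0" by (simp add: binomial_eq_0)
    hence "(\<Prod>i<m. (of_nat N - of_nat i :: 'a)) = 0" by (metis Suc.IH mult_0_right of_nat_0)
    then show ?thesis using \<open>N choose m = 0\<close> by simp
  qed
  finally show ?case by (simp add: lessThan_Suc)
qed

lemma coeff_lin_pow:
  fixes t :: "'a::comm_semiring_1"
  shows "Polynomial.coeff ([:1,t:]^n) k = of_nat (n choose k) * t^k"
proof (induction n arbitrary: k)
  case 0
  then show ?case by (cases k) auto
next
  case (Suc n)
  have "[:1,t:]^Suc n = Polynomial.smult 1 ([:1,t:]^n) + pCons 0 (Polynomial.smult t ([:1,t:]^n))"
    by (simp add: mult_pCons_left)
  then show ?case using Suc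
    by (cases k) (simp_all add: algebra_simps)
qed

lemma poly_binom_eval:
  fixes c x :: "'a::field"
  assumes "of_nat (fact m) \<noteq> (0::'a)" and "poly [:-1, c:] x = of_nat N"
  shows "poly (binom_poly [:-1, c:] m) x = of_nat (N choose m)"
proof -
  have "poly (binom_poly [:-1, c:] m) x = inverse (of_nat (fact m)) * (\<Prod>i<m. (of_nat N - of_nat i :: 'a))"
    unfolding binom_poly_def poly_smult poly_prod poly_diff assms(2) by simp
  also have "\<dots> = inverse (of_nat (fact m)) * (of_nat (fact m) * of_nat (N choose m))"
    by (simp only: fact_choose_prod[symmetric] of_nat_mult)
  also have "\<dots> = of_nat (N choose m)" using assms(1) by simp
  finally show ?thesis .
qed

lemma CHAR_card_prime:
  assumes "prime p" "CARD('a::{field,finite}) = p"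
  shows "CHAR('a) = p"
proof -
  have pos: "CHAR('a) > 0" by (rule finite_imp_CHAR_pos) simp
  have "prime CHAR('a)" by (rule prime_CHAR_semidom[OF pos])
  moreover have "CHAR('a) dvd p" using CHAR_dvd_CARD[where 'a='a] assms by simp
  ultimately show ?thesis using assms(1) primes_dvd_imp_eq by blast
qed

lemma const_poly_pow: "[:c:]^n = [:(c::'a::comm_semiring_1)^n:]"
  by (induction n) (simp_all add: mult_ac)

lemma binom_p1_vanish:
  assumes "prime p" "N \<noteq> p - 1" "N \<le> 2 * p - 2"
  shows "p dvd (N choose (p - 1))"
proof (cases "N < p - 1")
  case True
  then show ?thesis by (simp add: binomial_eq_0)
next
  case False
  with assms have Np: "p \<le> N" by linarith
  have p2: "p \<ge> 2" using assms(1) prime_ge_2_nat by blast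
  have e: "fact (p - 1) * fact (N - (p - 1)) * (N choose (p - 1)) = fact N"
    using binomial_fact_lemma[of "p - 1" N] Np by simp
  have "p dvd fact N" using prime_dvd_fact_iff[OF assms(1)] Np by simp
  moreover have "\<not> p dvd fact (p - 1)" using prime_dvd_fact_iff[OF assms(1)] p2 by simp
  moreover have "\<not> p dvd fact (N - (p - 1))" using prime_dvd_fact_iff[OF assms(1)] p2 assms(3) by simp
  ultimately show ?thesis using e assms(1)
    by (metis prime_dvd_mult_iff)
qed

theorem theorem12:
  fixes p s a a' :: nat
  assumes "prime p" and "odd p"
    and "CARD('a::{field,finite}) = p"
    and "0 < s" and "s < p - 1"
    and "0 < a" and "a < p" and "0 < a'" and "a' < p"
    and "[a' = s * a] (mod p)"
  shows "poly (b_poly 1 s :: 'a poly) (of_nat a) = 0 \<longleftrightarrow> a + a' < p"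
proof -
  have CH: "CHAR('a) = p" using CHAR_card_prime assms(1,3) by blast
  have ofnat0: "\<And>n. (of_nat n :: 'a) = 0 \<longleftrightarrow> p dvd n"
    using of_nat_eq_0_iff_char_dvd CH by metis
  have p2: "p \<ge> 2" using assms(1) prime_ge_2_nat by blast
  have factnz: "\<And>m. m < p \<Longrightarrow> (of_nat (fact m) :: 'a) \<noteq> 0"
    using ofnat0 prime_dvd_fact_iff[OF assms(1)] by simp
  have sa: "(of_nat s * of_nat a :: 'a) = of_nat a'"
  proof -
    have "(of_nat (s * a) :: 'a) = of_nat a'"
      using of_nat_eq_iff_cong_CHAR[of "s * a" a', where 'a='a] CH assms(10)
      by (simp add: cong_sym)
    then show ?thesis by simp
  qed
  have s_nz: "(of_nat s :: 'a) \<noteq> 0" using ofnat0 assms(4,5) by (auto dest: dvd_imp_le)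
  have a_nz: "(of_nat a :: 'a) \<noteq> 0" using ofnat0 assms(6,7) by (auto dest: dvd_imp_le)
  have "\<not> p dvd Suc s" using assms(4,5) by (auto dest: dvd_imp_le)
  hence s1_nz: "(of_nat (Suc s) :: 'a) \<noteq> 0" using ofnat0[of "Suc s"] by blast
  define t :: 'a where "t = - (1 / of_nat s)"
  define A where "A = a - 1"
  define B where "B = a' - 1"
  have t_nz: "t \<noteq> 0" using s_nz by (simp add: t_def)
  have t1_nz: "1 - t \<noteq> 0"
  proof
    assume h: "1 - t = 0"
    have "of_nat s * (1 - t) = of_nat s + (1::'a)" using s_nz by (simp add: t_def field_simps)
    hence "(of_nat (Suc s) :: 'a) = 0" using h by (simp add: add.commute)
    with s1_nz show False by simp
  qed
  have evalsum: "poly (b_poly 1 s :: 'a poly) (of_nat a)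
      = (\<Sum>k<p. t^k * (of_nat (A choose (p - 1 - k)) * of_nat (B choose k)))"
    unfolding b_poly_def assms(3) poly_sum poly_smult poly_mult
  proof (rule sum.cong[OF refl])
    fix k assume k: "k \<in> {..<p}"
    have e1: "poly (binom_poly [:-1, of_nat 1:] (p - 1 - k)) (of_nat a :: 'a) = of_nat (A choose (p - 1 - k))"
      by (rule poly_binom_eval) (use factnz k assms(6) in \<open>auto simp: A_def of_nat_diff\<close>)
    have e2: "poly (binom_poly [:-1, of_nat s:] k) (of_nat a :: 'a) = of_nat (B choose k)"
      by (rule poly_binom_eval) (use factnz k assms(8) sa in \<open>auto simp: B_def of_nat_diff mult.commute\<close>)
    show "(- (of_nat 1 / of_nat s)) ^ k * (poly (binom_poly [:-1, of_nat 1:] (p - 1 - k)) (of_nat a) *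
          poly (binom_poly [:-1, of_nat s:] k) (of_nat a)) =
         t ^ k * (of_nat (A choose (p - 1 - k)) * of_nat (B choose k))"
      using e1 e2 by (simp add: t_def)
  qed
  define Q :: "'a poly" where "Q = [:1,1:]^A * [:1,t:]^B"
  have pm: "{..p - 1} = {..<p}" using p2 by auto
  have c1: "Polynomial.coeff Q (p - 1) = (\<Sum>i<p. of_nat (A choose i) * (of_nat (B choose (p - 1 - i)) * t^(p - 1 - i)))"
    unfolding Q_def coeff_mult pm by (simp add: coeff_lin_pow)
  also have "\<dots> = (\<Sum>k<p. of_nat (A choose (p - Suc k)) * (of_nat (B choose (p - 1 - (p - Suc k))) * t^(p - 1 - (p - Suc k))))"
    by (rule sum.nat_diff_reindex[symmetric])
  also have "\<dots> = (\<Sum>k<p. t^k * (of_nat (A choose (p - 1 - k)) * of_nat (B choose k)))"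
    by (rule sum.cong[OF refl]) (auto simp: mult_ac)
  finally have c2: "poly (b_poly 1 s :: 'a poly) (of_nat a) = Polynomial.coeff Q (p - 1)"
    using evalsum by simp
  have lin: "[:1,t:] = Polynomial.smult t [:1,1:] + [:1-t:]" by simp
  have QJ: "Q = (\<Sum>j\<le>B. Polynomial.smult (of_nat (B choose j) * t^j * (1-t)^(B-j)) ([:1,1:]^(A+j)))"
  proof -
    have "Q = [:1,1:]^A * (\<Sum>j\<le>B. of_nat (B choose j) * (Polynomial.smult t [:1,1:])^j * [:1-t:]^(B-j))"
      unfolding Q_def by (subst lin, subst binomial_ring) (rule refl)
    also have "\<dots> = (\<Sum>j\<le>B. Polynomial.smult (of_nat (B choose j) * t^j * (1-t)^(B-j)) ([:1,1:]^(A+j)))"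
      unfolding sum_distrib_left
      by (rule sum.cong[OF refl]) (simp only: smult_power, simp add: const_poly_pow power_add of_nat_poly mult_ac)
    finally show ?thesis .
  qed
  have c3: "Polynomial.coeff Q (p - 1) = (\<Sum>j\<le>B. of_nat (B choose j) * t^j * (1-t)^(B-j) * of_nat ((A+j) choose (p - 1)))"
    unfolding QJ coeff_sum by (simp add: coeff_lin_pow)
  have vanish: "\<And>j. j \<le> B \<Longrightarrow> A + j \<noteq> p - 1 \<Longrightarrow> (of_nat ((A+j) choose (p - 1)) :: 'a) = 0"
  proof -
    fix j assume "j \<le> B" "A + j \<noteq> p - 1"
    moreover have "A + B \<le> 2 * p - 2" using assms(7,9) by (simp add: A_def B_def)
    ultimately show "(of_nat ((A+j) choose (p - 1)) :: 'a) = 0"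
      using binom_p1_vanish[OF assms(1), of "A + j"] ofnat0 by simp
  qed
  show ?thesis
  proof (cases "a + a' < p")
    case True
    have "Polynomial.coeff Q (p - 1) = 0" unfolding c3
    proof (rule sum.neutral, rule ballI)
      fix j assume j: "j \<in> {..B}"
      hence "A + j < p - 1" using True assms(6,8) by (simp add: A_def B_def)
      then show "of_nat (B choose j) * t^j * (1-t)^(B-j) * (of_nat ((A+j) choose (p - 1)) :: 'a) = 0"
        by (simp add: binomial_eq_0)
    qed
    then show ?thesis using True c2 by simp
  next
    case False
    have "a + a' \<noteq> p"
    proof
      assume h: "a + a' = p"
      have "(of_nat (a + a') :: 'a) = 0" using h ofnat0 by simp
      hence "of_nat a + of_nat s * of_nat a = (0::'a)" using sa by simp
      hence "of_nat a * of_nat (Suc s) = (0::'a)" by (simp add: algebra_simps)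
      then show False using a_nz s1_nz by simp
    qed
    with False have gt: "a + a' > p" by simp
    define j0 where "j0 = p - a"
    have j0B: "j0 \<le> B" and Aj0: "A + j0 = p - 1" using gt assms(6,7) by (auto simp: j0_def A_def B_def)
    have "Polynomial.coeff Q (p - 1) = (\<Sum>j\<le>B. if j = j0 then of_nat (B choose j0) * t^j0 * (1-t)^(B-j0) else 0)"
      unfolding c3
    proof (rule sum.cong[OF refl])
      fix j assume j: "j \<in> {..B}"
      show "of_nat (B choose j) * t^j * (1-t)^(B-j) * (of_nat ((A+j) choose (p - 1)) :: 'a)
          = (if j = j0 then of_nat (B choose j0) * t^j0 * (1-t)^(B-j0) else 0)"
      proof (cases "j = j0")
        case True then show ?thesis using Aj0 by simp
      next
        case False
        hence "A + j \<noteq> p - 1" using Aj0 by simp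
        then show ?thesis using vanish j False by simp
      qed
    qed
    also have "\<dots> = of_nat (B choose j0) * t^j0 * (1-t)^(B-j0)"
      using j0B by (simp add: sum.delta)
    finally have cQ: "Polynomial.coeff Q (p - 1) = of_nat (B choose j0) * t^j0 * (1-t)^(B-j0)" .
    have "\<not> p dvd (B choose j0)"
    proof
      assume d: "p dvd (B choose j0)"
      have "fact j0 * fact (B - j0) * (B choose j0) = fact B" using binomial_fact_lemma[OF j0B] .
      hence "p dvd fact B" using d by (metis dvd_mult)
      moreover have "B < p" using assms(9) by (simp add: B_def)
      ultimately show False using prime_dvd_fact_iff[OF assms(1)] by simp
    qed
    hence "(of_nat (B choose j0) :: 'a) \<noteq> 0" using ofnat0 by simp
    hence "Polynomial.coeff Q (p - 1) \<noteq> 0" using cQ t_nz t1_nz by simp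
    then show ?thesis using c2 False by simp
  qed
qed

end
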